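(* Let $\{A_i\}_{i\in I}$ be a finite set of ReCiPe agents with discrete-system representation $\langle\mathcal{V},\rho,\theta\rangle$ and let $\mathcal{T}=\|_{i\in I}\mathcal{T}(A_i)$. Then the system traces $s_0m_0s_1m_1\dots$ with $\theta(s_0)$ are exactly the paths $s_0,a_0,s_1,a_1,\dots$ of $\mathcal{T}$ all of whose labels are send labels, under the identification of the observation $m_t=\langle ch_t,{\bf d}_t,k,\pi_t\rangle$ with the label $a_t=({\bf d}_t,k,\pi_t,!,ch_t)$.
   Context: Fix a set $CV$ of common variables, a set $D$ of data variables, and a set $Ch$ of channels containing the broadcast channel $\star$; variables range over finite domains. A ReCiPe agent is $A_i=\langle V_i,f_i,g^i_s,g^i_r,\mathcal{T}^i_s,\mathcal{T}^i_r,\theta_i\rangle$: $V_i$ finite set of local variables (local state $s_i$ = assignment to $V_i$); $f_i:CV\to V_i$ renaming, also the assertion $\bigwedge_{cv}cv=f_i(cv)$; send guard $g^i_s(V_i,Ch,D,CV)$; receive guard $g^i_r(V_i,Ch)$ with $g^i_r(V_i,\star)=\mathsf{true}$; send/receive transition assertions $\mathcal{T}^i_s,\mathcal{T}^i_r$ over $(V_i,V_i',D,Ch)$ with $\forall v,{\bf d}\,\exists v'.\,\mathcal{T}^i_r(v,v',{\bf d},\star)$; initial assertion $\theta_i$. Predicates over $CV$ are identified with sets of assignments; $\pi(f_i^{-1}(s_i))$ means the assignment $cv\mapsto s_i(f_i(cv))$ satisfies $\pi$. CTS semantics $\mathcal{T}(A_i)$: states = local states, initial states those satisfying $\theta_i$,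 $\mathsf{ls}(s)=\{c:g^i_r(s,c)\}$, transitions $(s,({\bf d},i,\pi,!,c),s')$ iff $\mathcal{T}^i_s(s,s',{\bf d},c)$ and $\pi=g^i_s(s,c,{\bf d})$, and $(s,({\bf d},i',\pi,?,c),s')$ iff $\mathcal{T}^i_r(s,s',{\bf d},c)$, $i'\neq i$, $c\in\mathsf{ls}(s)$ and $\pi(f_i^{-1}(s))$. Parallel composition of CTSs: product states and initial states, union of listening sets, and transitions: a send $(\upsilon,!,c)$ by one component combined with either a receive $(\upsilon,?,c)$ of the other or, if the other does not listen to $c$, the other staying put; two receives combine, or a receive combines with a non-listening component staying put; on $\star$, a send or receive by one component combines with the other staying put when the other has no $(\upsilon,?,\star)$ transition. A path of a CTS is an infinite sequence $s_0,a_0,s_1,a_1,\dots$ with $s_0$ initial and each $(s_j,a_j,s_{j+1})$ a transition. Discrete representation: $\mathcal{V}=\bigcup_iV_i$, $\theta=\bigwedge_i\theta_i$. A system trace is an infinite sequence $s_0m_0s_1m_1\dots$ of global states and observations such that for all $t$: $m_t=\langle ch_t,{\bf d}_t,k,\pi_t\rangle$, $\pi_t=g^k_s(s^k_t,{\bf d}_t,ch_t)$, and $(s_t,s_{t+1})$ satisfies $\mathcal{T}^k_s(s^k_t,s^k_{t+1},{\bf d}_t,ch_t)\wedge\bigwedge_{j\neq k}\exists CV.\,f_j\wedge[(g^j_r(s^j_t,ch_t)\wedge\mathcal{T}^j_r(s^j_t,s^j_{t+1},{\bf d}_t,ch_t)\wedge\pi_t)\vee(\neg g^j_r(s^j_t,ch_t)\wedge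 s^j_t=s^j_{t+1})\vee(ch_t=\star\wedge\neg\pi_t\wedge s^j_t=s^j_{t+1})]$, where $s^j_t$ is the projection of $s_t$ to $V_j$. *)

theory Defs
  imports Main
begin

text \<open>A local/global state is an assignment of values to a set of
variables, modelled as a partial map whose domain is that set of variables.
Data assignments are abstracted by the type 'd, channels by 'ch, and a predicate over the
common variables CV is a set of CV-assignments, i.e. a function ('cv => 'val) => bool.\<close>

type_synonym ('var, 'val) asg = "'var \<Rightarrow> 'val option"
type_synonym ('cv, 'val) cvpred = "('cv \<Rightarrow> 'val) \<Rightarrow> bool"

record ('var, 'val, 'cv, 'd, 'ch) agent =
  vars :: "'var set"
  rn   :: "'cv \<Rightarrow> 'var"
  gsnd :: "('var, 'val) asg \<Rightarrow> 'ch \<Rightarrow> 'd \<Rightarrow> ('cv, 'val) cvpred"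
  grcv :: "('var, 'val) asg \<Rightarrow> 'ch \<Rightarrow> bool"
  Tsnd :: "('var, 'val) asg \<Rightarrow> ('var, 'val) asg \<Rightarrow> 'd \<Rightarrow> 'ch \<Rightarrow> bool"
  Trcv :: "('var, 'val) asg \<Rightarrow> ('var, 'val) asg \<Rightarrow> 'd \<Rightarrow> 'ch \<Rightarrow> bool"
  theta :: "('var, 'val) asg \<Rightarrow> bool"

definition lstates :: "('var, 'val, 'cv, 'd, 'ch, 'z) agent_scheme \<Rightarrow> ('var, 'val) asg set" where
  "lstates A = {s. dom s = vars A}"

text \<open>The CV-assignment cv |-> s(f(cv)) (written f^{-1}(s) in the paper).\<close>
definition cv_view :: "('var, 'val, 'cv, 'd, 'ch, 'z) agent_scheme \<Rightarrow> ('var, 'val) asg \<Rightarrow> ('cv \<Rightarrow> 'val)" where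
  "cv_view A s = (\<lambda>cv. the (s (rn A cv)))"

text \<open>Well-formedness conditions of a ReCiPe agent (star is the broadcast channel).\<close>
definition wf_agent :: "'ch \<Rightarrow> ('var, 'val, 'cv, 'd, 'ch, 'z) agent_scheme \<Rightarrow> bool" where
  "wf_agent star A \<longleftrightarrow>
     finite (vars A) \<and> range (rn A) \<subseteq> vars A \<and>
     (\<forall>s \<in> lstates A. grcv A s star) \<and>
     (\<forall>s \<in> lstates A. \<forall>d. \<exists>s' \<in> lstates A. Trcv A s s' d star)"

datatype dir = Snd | Rcv

datatype ('d, 'i, 'p, 'ch) lbl = Lbl 'd 'i 'p dir 'ch

record ('s, 'l, 'ch) cts =
  cstates :: "'s set"
  cinit   :: "'s set"
  clisten :: "'s \<Rightarrow> 'ch set"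
  ctrans  :: "('s \<times> 'l \<times> 's) set"

type_synonym ('var, 'val, 'cv, 'd, 'i, 'ch) rcts =
  "(('var, 'val) asg, ('d, 'i, ('cv, 'val) cvpred, 'ch) lbl, 'ch) cts"

definition cts_of :: "'i \<Rightarrow> ('var, 'val, 'cv, 'd, 'ch) agent \<Rightarrow> ('var, 'val, 'cv, 'd, 'i, 'ch) rcts" where
  "cts_of i A = \<lparr> cstates = lstates A,
     cinit = {s \<in> lstates A. theta A s},
     clisten = (\<lambda>s. {c. grcv A s c}),
     ctrans = {(s, Lbl d i p Snd c, s') | s s' d p c.
                  s \<in> lstates A \<and> s' \<in> lstates A \<and> Tsnd A s s' d c \<and> p = gsnd A s c d}
            \<union> {(s, Lbl d i' p Rcv c, s') | s s' d i' p c.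
                  s \<in> lstates A \<and> s' \<in> lstates A \<and> Trcv A s s' d c \<and> i' \<noteq> i \<and>
                  c \<in> {c. grcv A s c} \<and> p (cv_view A s)} \<rparr>"

definition par_step :: "'ch \<Rightarrow> ('s, ('d, 'i, 'p, 'ch) lbl, 'ch) cts \<Rightarrow> ('s, ('d, 'i, 'p, 'ch) lbl, 'ch) cts
     \<Rightarrow> 's \<Rightarrow> 's \<Rightarrow> ('d, 'i, 'p, 'ch) lbl \<Rightarrow> 's \<Rightarrow> 's \<Rightarrow> bool" where
  "par_step star T1 T2 s1 s2 a s1' s2' \<longleftrightarrow>
    (case a of Lbl d i p dr c \<Rightarrow>
      let snd = Lbl d i p Snd c; rcv = Lbl d i p Rcv c in
      (dr = Snd \<and>
        (((s1, snd, s1') \<in> ctrans T1 \<and> ((s2, rcv, s2') \<in> ctrans T2 \<or> (c \<notin> clisten T2 s2 \<and> s2' = s2)))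
         \<or> ((s2, snd, s2') \<in> ctrans T2 \<and> ((s1, rcv, s1') \<in> ctrans T1 \<or> (c \<notin> clisten T1 s1 \<and> s1' = s1)))))
      \<or> (dr = Rcv \<and>
        (((s1, rcv, s1') \<in> ctrans T1 \<and> (s2, rcv, s2') \<in> ctrans T2)
         \<or> ((s1, rcv, s1') \<in> ctrans T1 \<and> c \<notin> clisten T2 s2 \<and> s2' = s2)
         \<or> ((s2, rcv, s2') \<in> ctrans T2 \<and> c \<notin> clisten T1 s1 \<and> s1' = s1)))
      \<or> (c = star \<and>
        (((s1, a, s1') \<in> ctrans T1 \<and> s2' = s2 \<and> \<not> (\<exists>s2''. (s2, rcv, s2'') \<in> ctrans T2))
         \<or> ((s2, a, s2') \<in> ctrans T2 \<and> s1' = s1 \<and> \<not> (\<exists>s1''. (s1, rcv, s1'') \<in> ctrans T1)))))"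

text \<open>Binary parallel composition. Product states (s1, s2) are identified with the joint
assignment s1 ++ s2 (components have disjoint sets of variables).\<close>
definition par :: "'ch \<Rightarrow> ('var, 'val, 'cv, 'd, 'i, 'ch) rcts \<Rightarrow> ('var, 'val, 'cv, 'd, 'i, 'ch) rcts
     \<Rightarrow> ('var, 'val, 'cv, 'd, 'i, 'ch) rcts" where
  "par star T1 T2 = \<lparr>
     cstates = {s1 ++ s2 | s1 s2. s1 \<in> cstates T1 \<and> s2 \<in> cstates T2},
     cinit = {s1 ++ s2 | s1 s2. s1 \<in> cinit T1 \<and> s2 \<in> cinit T2},
     clisten = (\<lambda>s. {c. \<exists>s1 s2. s = s1 ++ s2 \<and> s1 \<in> cstates T1 \<and> s2 \<in> cstates T2 \<and>
                           (c \<in> clisten T1 s1 \<or> c \<in> clisten T2 s2)}),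
     ctrans = {(s, a, s') | s a s'. \<exists>s1 s2 s1' s2'.
                 s = s1 ++ s2 \<and> s' = s1' ++ s2' \<and>
                 s1 \<in> cstates T1 \<and> s1' \<in> cstates T1 \<and> s2 \<in> cstates T2 \<and> s2' \<in> cstates T2 \<and>
                 par_step star T1 T2 s1 s2 a s1' s2'} \<rparr>"

fun par_all :: "'ch \<Rightarrow> ('i \<Rightarrow> ('var, 'val, 'cv, 'd, 'ch) agent) \<Rightarrow> 'i list
     \<Rightarrow> ('var, 'val, 'cv, 'd, 'i, 'ch) rcts" where
  "par_all star A [] = \<lparr> cstates = {}, cinit = {}, clisten = (\<lambda>_. {}), ctrans = {} \<rparr>"
| "par_all star A [i] = cts_of i (A i)"
| "par_all star A (i # j # js) = par star (cts_of i (A i)) (par_all star A (j # js))"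

definition is_path :: "('s, 'l, 'ch) cts \<Rightarrow> (nat \<Rightarrow> 's) \<Rightarrow> (nat \<Rightarrow> 'l) \<Rightarrow> bool" where
  "is_path T s a \<longleftrightarrow> s 0 \<in> cinit T \<and> (\<forall>j. (s j, a j, s (Suc j)) \<in> ctrans T)"

fun is_send :: "('d, 'i, 'p, 'ch) lbl \<Rightarrow> bool" where
  "is_send (Lbl d i p dr c) = (dr = Snd)"

type_synonym ('cv, 'val, 'd, 'i, 'ch) obs = "'ch \<times> 'd \<times> 'i \<times> ('cv, 'val) cvpred"

definition allvars :: "'i set \<Rightarrow> ('i \<Rightarrow> ('var, 'val, 'cv, 'd, 'ch) agent) \<Rightarrow> 'var set" where
  "allvars I A = (\<Union>i\<in>I. vars (A i))"

definition sys_theta :: "'i set \<Rightarrow> ('i \<Rightarrow> ('var, 'val, 'cv, 'd, 'ch) agent) \<Rightarrow> ('var, 'val) asg \<Rightarrow> bool" where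
  "sys_theta I A s \<longleftrightarrow> (\<forall>i\<in>I. theta (A i) (s |` vars (A i)))"

definition sys_step :: "'ch \<Rightarrow> 'i set \<Rightarrow> ('i \<Rightarrow> ('var, 'val, 'cv, 'd, 'ch) agent)
     \<Rightarrow> ('var, 'val) asg \<Rightarrow> ('cv, 'val, 'd, 'i, 'ch) obs \<Rightarrow> ('var, 'val) asg \<Rightarrow> bool" where
  "sys_step star I A s m s' \<longleftrightarrow>
    (case m of (ch, d, k, p) \<Rightarrow>
      k \<in> I \<and>
      p = gsnd (A k) (s |` vars (A k)) ch d \<and>
      Tsnd (A k) (s |` vars (A k)) (s' |` vars (A k)) d ch \<and>
      (\<forall>j \<in> I - {k}.
         let sj = s |` vars (A j); sj' = s' |` vars (A j) in
         \<exists>cvv. (\<forall>cv. cvv cv = the (sj (rn (A j) cv))) \<and>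
           ((grcv (A j) sj ch \<and> Trcv (A j) sj sj' d ch \<and> p cvv)
            \<or> (\<not> grcv (A j) sj ch \<and> sj = sj')
            \<or> (ch = star \<and> \<not> p cvv \<and> sj = sj'))))"

definition is_sys_trace :: "'ch \<Rightarrow> 'i set \<Rightarrow> ('i \<Rightarrow> ('var, 'val, 'cv, 'd, 'ch) agent)
     \<Rightarrow> (nat \<Rightarrow> ('var, 'val) asg) \<Rightarrow> (nat \<Rightarrow> ('cv, 'val, 'd, 'i, 'ch) obs) \<Rightarrow> bool" where
  "is_sys_trace star I A s m \<longleftrightarrow>
     (\<forall>t. dom (s t) = allvars I A \<and> sys_step star I A (s t) (m t) (s (Suc t)))"

fun obs_lbl :: "('cv, 'val, 'd, 'i, 'ch) obs \<Rightarrow> ('d, 'i, ('cv, 'val) cvpred, 'ch) lbl" where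
  "obs_lbl (ch, d, k, p) = Lbl d k p Snd ch"

end

theory Submission imports Defs begin

lemma restr_dom_eq: "dom s = V \<Longrightarrow> s |` V = s"
  by (rule ext) (auto simp: restrict_map_def)

lemma decomp1: "dom s1 = V1 \<Longrightarrow> dom s2 = V2 \<Longrightarrow> V1 \<inter> V2 = {} \<Longrightarrow> (s1 ++ s2) |` V1 = s1"
  by (rule ext) (auto simp: restrict_map_def map_add_def split: option.splits)

lemma decomp2: "dom s1 = V1 \<Longrightarrow> dom s2 = V2 \<Longrightarrow> V1 \<inter> V2 = {} \<Longrightarrow> (s1 ++ s2) |` V2 = s2"
  by (rule ext) (auto simp: restrict_map_def map_add_def split: option.splits)

lemma recomp: "dom s = V1 \<union> V2 \<Longrightarrow> s = s |` V1 ++ s |` V2"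
  by (rule ext) (auto simp: restrict_map_def map_add_def split: option.splits)

lemma par_states:
  assumes "cstates T1 = {s. dom s = V1}" "cstates T2 = {s. dom s = V2}" "V1 \<inter> V2 = {}"
  shows "cstates (par star T1 T2) = {s. dom s = V1 \<union> V2}"
proof -
  have "s \<in> cstates (par star T1 T2)" if "dom s = V1 \<union> V2" for s
  proof -
    have "dom (s|`V1) = V1" "dom (s|`V2) = V2" using that by auto
    then show ?thesis using recomp[OF that] assms(1,2) unfolding par_def
      by (simp only: cts.simps mem_Collect_eq) blast
  qed
  then show ?thesis using assms unfolding par_def by auto
qed

lemma par_listen:
  assumes "cstates T1 = {s. dom s = V1}" "cstates T2 = {s. dom s = V2}" "V1 \<inter> V2 = {}"
    and "dom s = V1 \<union> V2"
  shows "clisten (par star T1 T2) s = clisten T1 (s |` V1) \<union> clisten T2 (s |` V2)"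
proof -
  have d1: "dom (s|`V1) = V1" and d2: "dom (s|`V2) = V2" using assms(4) by auto
  show ?thesis
  proof (rule set_eqI, rule iffI)
    fix c assume "c \<in> clisten (par star T1 T2) s"
    then obtain s1 s2 where h: "s = s1 ++ s2" "dom s1 = V1" "dom s2 = V2"
      "c \<in> clisten T1 s1 \<or> c \<in> clisten T2 s2" using assms(1,2) unfolding par_def by auto
    then show "c \<in> clisten T1 (s |` V1) \<union> clisten T2 (s |` V2)"
      using decomp1[OF h(2,3) assms(3)] decomp2[OF h(2,3) assms(3)] by auto
  next
    fix c assume "c \<in> clisten T1 (s |` V1) \<union> clisten T2 (s |` V2)"
    then show "c \<in> clisten (par star T1 T2) s"
      using recomp[OF assms(4)] d1 d2 assms(1,2) unfolding par_def
      by (simp only: cts.simps mem_Collect_eq Un_iff) blast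
  qed
qed

lemma par_init:
  assumes "cstates T1 = {s. dom s = V1}" "cstates T2 = {s. dom s = V2}" "V1 \<inter> V2 = {}"
    and "cinit T1 \<subseteq> cstates T1" "cinit T2 \<subseteq> cstates T2"
  shows "cinit (par star T1 T2) = {s. dom s = V1 \<union> V2 \<and> s |` V1 \<in> cinit T1 \<and> s |` V2 \<in> cinit T2}"
proof (rule set_eqI, rule iffI)
  fix s assume "s \<in> cinit (par star T1 T2)"
  then obtain s1 s2 where h: "s = s1 ++ s2" "s1 \<in> cinit T1" "s2 \<in> cinit T2" unfolding par_def by auto
  have "s1 \<in> cstates T1" "s2 \<in> cstates T2" using assms(4,5) h(2,3) by (auto dest: subsetD)
  then have d: "dom s1 = V1" "dom s2 = V2" using assms(1,2) by simp_all
  have e1: "s |` V1 = s1" using h(1) decomp1[OF d assms(3)] by simp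
  have e2: "s |` V2 = s2" using h(1) decomp2[OF d assms(3)] by simp
  have e3: "dom s = V1 \<union> V2" using h(1) d by auto
  show "s \<in> {s. dom s = V1 \<union> V2 \<and> s |` V1 \<in> cinit T1 \<and> s |` V2 \<in> cinit T2}"
    using e1 e2 e3 h(2,3) by simp
next
  fix s assume "s \<in> {s. dom s = V1 \<union> V2 \<and> s |` V1 \<in> cinit T1 \<and> s |` V2 \<in> cinit T2}"
  then have h: "dom s = V1 \<union> V2" "s |` V1 \<in> cinit T1" "s |` V2 \<in> cinit T2" by auto
  have "s \<in> {s1 ++ s2 | s1 s2. s1 \<in> cinit T1 \<and> s2 \<in> cinit T2}"
    apply (rule CollectI, rule exI[of _ "s|`V1"], rule exI[of _ "s|`V2"])
    using h recomp[OF h(1), symmetric] by simp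
  then show "s \<in> cinit (par star T1 T2)" unfolding par_def by simp
qed

lemma par_trans:
  assumes "cstates T1 = {s. dom s = V1}" "cstates T2 = {s. dom s = V2}" "V1 \<inter> V2 = {}"
  shows "(s, a, s') \<in> ctrans (par star T1 T2) \<longleftrightarrow> dom s = V1 \<union> V2 \<and> dom s' = V1 \<union> V2 \<and>
     par_step star T1 T2 (s|`V1) (s|`V2) a (s'|`V1) (s'|`V2)"
proof
  assume "(s, a, s') \<in> ctrans (par star T1 T2)"
  then obtain s1 s2 s1' s2' where h: "s = s1 ++ s2" "s' = s1' ++ s2'" "dom s1 = V1" "dom s2 = V2"
    "dom s1' = V1" "dom s2' = V2" "par_step star T1 T2 s1 s2 a s1' s2'"
    using assms unfolding par_def by auto
  then show "dom s = V1 \<union> V2 \<and> dom s' = V1 \<union> V2 \<and>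
     par_step star T1 T2 (s|`V1) (s|`V2) a (s'|`V1) (s'|`V2)"
    using decomp1[of s1 V1 s2 V2] decomp2[of s1 V1 s2 V2]
      decomp1[of s1' V1 s2' V2] decomp2[of s1' V1 s2' V2] assms(3) by auto
next
  assume h: "dom s = V1 \<union> V2 \<and> dom s' = V1 \<union> V2 \<and>
     par_step star T1 T2 (s|`V1) (s|`V2) a (s'|`V1) (s'|`V2)"
  then show "(s, a, s') \<in> ctrans (par star T1 T2)"
  proof -
    have "dom (s|`V1) = V1" "dom (s|`V2) = V2" "dom (s'|`V1) = V1" "dom (s'|`V2) = V2" using h by auto
    note r = recomp[of s V1 V2, symmetric] recomp[of s' V1 V2, symmetric]
    show ?thesis unfolding par_def cts.simps
      apply (rule CollectI, rule exI[of _ s], rule exI[of _ a], rule exI[of _ s'], rule conjI, rule refl)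
      apply (rule exI[of _ "s|`V1"], rule exI[of _ "s|`V2"], rule exI[of _ "s'|`V1"], rule exI[of _ "s'|`V2"])
      using r h assms(1,2) \<open>dom (s|`V1) = V1\<close> \<open>dom (s|`V2) = V2\<close> \<open>dom (s'|`V1) = V1\<close> \<open>dom (s'|`V2) = V2\<close>
      by simp
  qed
qed


definition Vs :: "('i \<Rightarrow> ('var, 'val, 'cv, 'd, 'ch) agent) \<Rightarrow> 'i list \<Rightarrow> 'var set" where
  "Vs A L = (\<Union>j\<in>set L. vars (A j))"

definition disjL :: "('i \<Rightarrow> ('var, 'val, 'cv, 'd, 'ch) agent) \<Rightarrow> 'i list \<Rightarrow> bool" where
  "disjL A L \<longleftrightarrow> (\<forall>i\<in>set L. \<forall>j\<in>set L. i \<noteq> j \<longrightarrow> vars (A i) \<inter> vars (A j) = {})"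

definition Rloc :: "('var, 'val, 'cv, 'd, 'ch) agent \<Rightarrow> 'd \<Rightarrow> ('cv, 'val) cvpred \<Rightarrow> 'ch
   \<Rightarrow> ('var, 'val) asg \<Rightarrow> ('var, 'val) asg \<Rightarrow> bool" where
  "Rloc B d p c x y \<longleftrightarrow> grcv B x c \<and> Trcv B x y d c \<and> p (cv_view B x)"

definition Gloc :: "'ch \<Rightarrow> ('var, 'val, 'cv, 'd, 'ch) agent \<Rightarrow> 'd \<Rightarrow> ('cv, 'val) cvpred \<Rightarrow> 'ch
   \<Rightarrow> ('var, 'val) asg \<Rightarrow> ('var, 'val) asg \<Rightarrow> bool" where
  "Gloc star B d p c x y \<longleftrightarrow> Rloc B d p c x y \<or> (\<not> grcv B x c \<and> x = y)
      \<or> (c = star \<and> \<not> p (cv_view B x) \<and> x = y)"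

lemma Vs_Nil[simp]: "Vs A [] = {}" by (simp add: Vs_def)
lemma Vs_Cons[simp]: "Vs A (i # L) = vars (A i) \<union> Vs A L" by (simp add: Vs_def)
lemma Vs_Int[simp]: "j \<in> set L \<Longrightarrow> Vs A L \<inter> vars (A j) = vars (A j)" by (auto simp: Vs_def)
lemma Vs_sub: "j \<in> set L \<Longrightarrow> vars (A j) \<subseteq> Vs A L" by (auto simp: Vs_def)

lemma disjL_Cons: "disjL A (i # L) \<Longrightarrow> disjL A L" by (auto simp: disjL_def)
lemma disjL_Cons2: "disjL A (i # L) \<Longrightarrow> i \<notin> set L \<Longrightarrow> vars (A i) \<inter> Vs A L = {}"
  by (auto simp: disjL_def Vs_def)

lemma single_states: "cstates (cts_of i B) = {s. dom s = vars B}"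
  by (simp add: cts_of_def lstates_def)
lemma single_init: "cinit (cts_of i B) = {s. dom s = vars B \<and> theta B s}"
  by (auto simp add: cts_of_def lstates_def)
lemma single_listen: "clisten (cts_of i B) s = {c. grcv B s c}"
  by (simp add: cts_of_def)
lemma single_rcv: "(x, Lbl d k p Rcv c, y) \<in> ctrans (cts_of i B) \<longleftrightarrow>
   dom x = vars B \<and> dom y = vars B \<and> k \<noteq> i \<and> Rloc B d p c x y"
  by (auto simp add: cts_of_def lstates_def Rloc_def)
lemma single_snd: "(x, Lbl d k p Snd c, y) \<in> ctrans (cts_of i B) \<longleftrightarrow>
   k = i \<and> dom x = vars B \<and> dom y = vars B \<and> Tsnd B x y d c \<and> p = gsnd B x c d"
  by (auto simp add: cts_of_def lstates_def)

lemma pa_states: "L \<noteq> [] \<Longrightarrow> distinct L \<Longrightarrow> disjL A L \<Longrightarrow> cstates (par_all star A L) = {s. dom s = Vs A L}"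
proof (induction star A L rule: par_all.induct)
  case (1 star A) then show ?case by simp
next
  case (2 star A i) then show ?case by (simp add: single_states)
next
  case (3 star A i j js)
  have d2: "distinct (j # js)" using 3(3) by simp
  have j2: "disjL A (j # js)" by (rule disjL_Cons[OF 3(4)])
  have "cstates (par_all star A (j # js)) = {s. dom s = Vs A (j # js)}"
    using 3(1)[OF _ d2 j2] by simp
  moreover have "vars (A i) \<inter> Vs A (j # js) = {}" using disjL_Cons2[OF 3(4)] 3(3) by simp
  ultimately show ?case using par_states[OF single_states] by simp
qed

lemma pa_init:
  fixes A :: "'i \<Rightarrow> ('var, 'val, 'cv, 'd, 'ch) agent"
  shows "L \<noteq> [] \<Longrightarrow> distinct L \<Longrightarrow> disjL A L \<Longrightarrow>
   cinit (par_all star A L) = {s. dom s = Vs A L \<and> (\<forall>j\<in>set L. theta (A j) (s |` vars (A j)))}"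
proof (induction star A L rule: par_all.induct)
  case (1 star A) then show ?case by simp
next
  case (2 star A i) then show ?case by (auto simp add: single_init restr_dom_eq)
next
  case (3 star A i j js)
  have d2: "distinct (j # js)" using 3(3) by simp
  have j2: "disjL A (j # js)" by (rule disjL_Cons[OF 3(4)])
  let ?V2 = "Vs A (j # js)"
  let ?V1 = "vars (A i)"
  have st: "cstates (par_all star A (j # js)) = {s. dom s = ?V2}"
    using pa_states[OF _ d2 j2] by simp
  have IH: "cinit (par_all star A (j # js)) = {s. dom s = ?V2 \<and> (\<forall>j'\<in>set (j # js). theta (A j') (s |` vars (A j')))}"
    using 3(1)[OF _ d2 j2] by simp
  have dj: "?V1 \<inter> ?V2 = {}" using disjL_Cons2[OF 3(4)] 3(3) by simp
  have s1: "cinit (cts_of i (A i)) \<subseteq> cstates (cts_of i (A i))" by (auto simp: single_init single_states)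
  have s2: "cinit (par_all star A (j # js)) \<subseteq> cstates (par_all star A (j # js))" unfolding IH st by auto
  have e: "cinit (par_all star A (i # j # js)) = {s. dom s = ?V1 \<union> ?V2 \<and>
     s |` ?V1 \<in> cinit (cts_of i (A i)) \<and> s |` ?V2 \<in> cinit (par_all star A (j # js))}"
    using par_init[OF single_states st dj s1 s2] by simp
  show ?case
  proof (rule set_eqI)
    fix s :: "('var, 'val) asg"
    show "s \<in> cinit (par_all star A (i # j # js)) \<longleftrightarrow>
          s \<in> {s. dom s = Vs A (i # j # js) \<and> (\<forall>j'\<in>set (i # j # js). theta (A j') (s |` vars (A j')))}"
    proof (cases "dom s = ?V1 \<union> ?V2")
      case True
      have r: "\<And>j'. j' \<in> set (j # js) \<Longrightarrow> s |` ?V2 |` vars (A j') = s |` vars (A j')"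
        by (simp only: restrict_restrict Vs_Int)
      have "s \<in> cinit (par_all star A (i # j # js)) \<longleftrightarrow>
             theta (A i) (s |` ?V1) \<and> (\<forall>j'\<in>set (j # js). theta (A j') (s |` ?V2 |` vars (A j')))"
        unfolding e IH single_init using True by auto
      also have "\<dots> \<longleftrightarrow> (\<forall>j'\<in>set (i # j # js). theta (A j') (s |` vars (A j')))"
        using r by auto
      finally show ?thesis using True by simp
    next
      case False
      then show ?thesis unfolding e by simp
    qed
  qed
qed

lemma pa_listen:
  fixes A :: "'i \<Rightarrow> ('var, 'val, 'cv, 'd, 'ch) agent"
  shows "L \<noteq> [] \<Longrightarrow> distinct L \<Longrightarrow> disjL A L \<Longrightarrow> \<forall>s. dom s = Vs A L \<longrightarrow>
   clisten (par_all star A L) s = {c. \<exists>j\<in>set L. grcv (A j) (s |` vars (A j)) c}"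
proof (induction star A L rule: par_all.induct)
  case (1 star A) then show ?case by simp
next
  case (2 star A i) then show ?case by (auto simp add: single_listen restr_dom_eq)
next
  case (3 star A i j js)
  have d2: "distinct (j # js)" using 3(3) by simp
  have j2: "disjL A (j # js)" by (rule disjL_Cons[OF 3(4)])
  have st: "cstates (par_all star A (j # js)) = {s. dom s = Vs A (j # js)}"
    using pa_states[OF _ d2 j2] by simp
  have IH: "\<forall>s. dom s = Vs A (j # js) \<longrightarrow> clisten (par_all star A (j # js)) s = {c. \<exists>j'\<in>set (j # js). grcv (A j') (s |` vars (A j')) c}"
    using 3(1)[OF _ d2 j2] by simp
  have dj: "vars (A i) \<inter> Vs A (j # js) = {}" using disjL_Cons2[OF 3(4)] 3(3) by simp
  show ?case
  proof (intro allI impI)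
    fix s :: "('var, 'val) asg" assume ds: "dom s = Vs A (i # j # js)"
    then have "dom (s |` Vs A (j # js)) = Vs A (j # js)" by auto
    then have "clisten (par_all star A (j # js)) (s |` Vs A (j # js)) =
       {c. \<exists>j'\<in>set (j # js). grcv (A j') (s |` Vs A (j # js) |` vars (A j')) c}"
      using IH by blast
    also have "\<dots> = {c. \<exists>j'\<in>set (j # js). grcv (A j') (s |` vars (A j')) c}"
    proof -
      have "\<And>j'. j' \<in> set (j # js) \<Longrightarrow> s |` Vs A (j # js) |` vars (A j') = s |` vars (A j')"
        by (simp only: restrict_restrict Vs_Int)
      then show ?thesis by (intro Collect_cong bex_cong refl) simp
    qed
    finally have e2: "clisten (par_all star A (j # js)) (s |` Vs A (j # js)) =
       {c. \<exists>j'\<in>set (j # js). grcv (A j') (s |` vars (A j')) c}" .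
    have "clisten (par_all star A (i # j # js)) s =
       clisten (cts_of i (A i)) (s |` vars (A i)) \<union> clisten (par_all star A (j # js)) (s |` Vs A (j # js))"
      using par_listen[OF single_states st dj, of s] ds by simp
    also have "\<dots> = {c. \<exists>j\<in>set (i # j # js). grcv (A j) (s |` vars (A j)) c}"
      unfolding e2 single_listen by auto
    finally show "clisten (par_all star A (i # j # js)) s = {c. \<exists>j\<in>set (i # j # js). grcv (A j) (s |` vars (A j)) c}" .
  qed
qed


lemma construct:
  fixes A :: "'i \<Rightarrow> ('var, 'val, 'cv, 'd, 'ch) agent" and t :: "'i \<Rightarrow> ('var, 'val) asg"
  assumes dj: "disjL A L" and dt: "\<forall>j\<in>set L. dom (t j) = vars (A j)"
  shows "\<exists>s. dom s = Vs A L \<and> (\<forall>j\<in>set L. s |` vars (A j) = t j)"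
proof -
  define s :: "('var, 'val) asg" where
    "s = (\<lambda>x. if \<exists>j\<in>set L. x \<in> vars (A j) then t (SOME j. j \<in> set L \<and> x \<in> vars (A j)) x else None)"
  have pick: "(SOME j. j \<in> set L \<and> x \<in> vars (A j)) = j" if "j \<in> set L" "x \<in> vars (A j)" for j x
  proof (rule some_equality)
    show "j \<in> set L \<and> x \<in> vars (A j)" using that by simp
  next
    fix j' assume "j' \<in> set L \<and> x \<in> vars (A j')"
    then show "j' = j" using that dj unfolding disjL_def by blast
  qed
  have "dom s = Vs A L"
  proof
    show "dom s \<subseteq> Vs A L" unfolding s_def Vs_def by (auto split: if_splits)
  next
    show "Vs A L \<subseteq> dom s"
    proof
      fix x assume "x \<in> Vs A L"
      then obtain j where j: "j \<in> set L" "x \<in> vars (A j)" unfolding Vs_def by auto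
      then have "s x = t j x" unfolding s_def using pick[OF j] by auto
      moreover have "x \<in> dom (t j)" using dt j by auto
      ultimately show "x \<in> dom s" by (simp add: domIff)
    qed
  qed
  moreover have "\<forall>j\<in>set L. s |` vars (A j) = t j"
  proof
    fix j assume j: "j \<in> set L"
    show "s |` vars (A j) = t j"
    proof
      fix x show "(s |` vars (A j)) x = t j x"
      proof (cases "x \<in> vars (A j)")
        case True then show ?thesis unfolding s_def using pick[OF j True] j by auto
      next
        case False
        then have "t j x = None" using dt j by auto
        then show ?thesis using False by simp
      qed
    qed
  qed
  ultimately show ?thesis by blast
qed

lemma eq_from_restr:
  fixes A :: "'i \<Rightarrow> ('var, 'val, 'cv, 'd, 'ch) agent" and s s' :: "('var, 'val) asg"
  assumes "dom s = Vs A L" "dom s' = Vs A L" "\<forall>j\<in>set L. s |` vars (A j) = s' |` vars (A j)"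
  shows "s = s'"
proof
  fix x show "s x = s' x"
  proof (cases "x \<in> Vs A L")
    case True
    then obtain j where j: "j \<in> set L" "x \<in> vars (A j)" unfolding Vs_def by auto
    then have "(s |` vars (A j)) x = (s' |` vars (A j)) x" using assms(3) by simp
    then show ?thesis using j by simp
  next
    case False then show ?thesis using assms(1,2) by (metis domIff)
  qed
qed

lemma wf_facts:
  assumes "wf_agent star B" "dom x = vars B"
  shows "grcv B x star" "\<exists>y. dom y = vars B \<and> Trcv B x y d star"
  using assms unfolding wf_agent_def lstates_def by auto

lemma good_from_rcv:
  fixes A :: "'i \<Rightarrow> ('var, 'val, 'cv, 'd, 'ch) agent" and s s' :: "('var, 'val) asg"
  assumes dj: "disjL A L" and wf: "\<forall>j\<in>set L. wf_agent star (A j)"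
  and rc: "\<And>s s'. (s, Lbl d k p Rcv c, s') \<in> ctrans (par_all star A L) \<longleftrightarrow>
     dom s = Vs A L \<and> dom s' = Vs A L \<and>
     (\<forall>j\<in>set L. Gloc star (A j) d p c (s |` vars (A j)) (s' |` vars (A j))) \<and>
     (\<exists>j\<in>set L. Rloc (A j) d p c (s |` vars (A j)) (s' |` vars (A j)))"
  and li: "clisten (par_all star A L) s = {c. \<exists>j\<in>set L. grcv (A j) (s |` vars (A j)) c}"
  and ds: "dom s = Vs A L" and ds': "dom s' = Vs A L"
  shows "(\<forall>j\<in>set L. Gloc star (A j) d p c (s |` vars (A j)) (s' |` vars (A j))) \<longleftrightarrow>
     (s, Lbl d k p Rcv c, s') \<in> ctrans (par_all star A L)
     \<or> (c \<notin> clisten (par_all star A L) s \<and> s' = s)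
     \<or> (c = star \<and> s' = s \<and> \<not> (\<exists>s''. (s, Lbl d k p Rcv c, s'') \<in> ctrans (par_all star A L)))"
proof -
  have dj': "dom (s |` vars (A j)) = vars (A j)" if "j \<in> set L" for j
    using ds Vs_sub[OF that, of A] by auto
  have grs: "grcv (A j) (s |` vars (A j)) star" if "j \<in> set L" for j
    using wf_facts(1)[OF _ dj'[OF that]] wf that by blast
  show ?thesis
  proof
    assume G: "\<forall>j\<in>set L. Gloc star (A j) d p c (s |` vars (A j)) (s' |` vars (A j))"
    show "(s, Lbl d k p Rcv c, s') \<in> ctrans (par_all star A L)
     \<or> (c \<notin> clisten (par_all star A L) s \<and> s' = s)
     \<or> (c = star \<and> s' = s \<and> \<not> (\<exists>s''. (s, Lbl d k p Rcv c, s'') \<in> ctrans (par_all star A L)))"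
    proof (cases "\<exists>j\<in>set L. Rloc (A j) d p c (s |` vars (A j)) (s' |` vars (A j))")
      case True then show ?thesis using rc ds ds' G by blast
    next
      case False
      then have loc: "\<forall>j\<in>set L. (\<not> grcv (A j) (s |` vars (A j)) c \<and> s |` vars (A j) = s' |` vars (A j))
          \<or> (c = star \<and> \<not> p (cv_view (A j) (s |` vars (A j))) \<and> s |` vars (A j) = s' |` vars (A j))"
        using G unfolding Gloc_def by blast
      then have "s = s'" using eq_from_restr[OF ds ds'] by blast
      show ?thesis
      proof (cases "c = star")
        case True
        have "\<not> (\<exists>s''. (s, Lbl d k p Rcv c, s'') \<in> ctrans (par_all star A L))"
        proof
          assume "\<exists>s''. (s, Lbl d k p Rcv c, s'') \<in> ctrans (par_all star A L)"
          then obtain s'' j where j: "j \<in> set L" "Rloc (A j) d p c (s |` vars (A j)) (s'' |` vars (A j))"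
            using rc by blast
          then have "p (cv_view (A j) (s |` vars (A j)))" unfolding Rloc_def by blast
          then show False using loc j(1) grs[OF j(1)] True by blast
        qed
        then show ?thesis using True \<open>s = s'\<close> by blast
      next
        case False
        then have "c \<notin> clisten (par_all star A L) s" unfolding li using loc by blast
        then show ?thesis using \<open>s = s'\<close> by blast
      qed
    qed
  next
    assume R: "(s, Lbl d k p Rcv c, s') \<in> ctrans (par_all star A L)
     \<or> (c \<notin> clisten (par_all star A L) s \<and> s' = s)
     \<or> (c = star \<and> s' = s \<and> \<not> (\<exists>s''. (s, Lbl d k p Rcv c, s'') \<in> ctrans (par_all star A L)))"
    show "\<forall>j\<in>set L. Gloc star (A j) d p c (s |` vars (A j)) (s' |` vars (A j))"
    proof (cases "(s, Lbl d k p Rcv c, s') \<in> ctrans (par_all star A L)")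
      case True then show ?thesis using rc by blast
    next
      case nr: False
      show ?thesis
      proof (cases "c \<notin> clisten (par_all star A L) s \<and> s' = s")
        case True then show ?thesis unfolding li Gloc_def by auto
      next
        case False
        then have st: "c = star" "s' = s" and no: "\<not> (\<exists>s''. (s, Lbl d k p Rcv c, s'') \<in> ctrans (par_all star A L))"
          using R nr by blast+
        show ?thesis
        proof (rule ccontr)
          assume "\<not> ?thesis"
          then obtain j0 where j0: "j0 \<in> set L" "\<not> Gloc star (A j0) d p c (s |` vars (A j0)) (s' |` vars (A j0))"
            by blast
          then have pj0: "p (cv_view (A j0) (s |` vars (A j0)))" using st unfolding Gloc_def by auto
          define t where "t = (\<lambda>j. if p (cv_view (A j) (s |` vars (A j)))
              then (SOME y. dom y = vars (A j) \<and> Trcv (A j) (s |` vars (A j)) y d star) else s |` vars (A j))"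
          have tprop: "dom (t j) = vars (A j) \<and> (p (cv_view (A j) (s |` vars (A j))) \<longrightarrow> Trcv (A j) (s |` vars (A j)) (t j) d star)"
            if "j \<in> set L" for j
          proof (cases "p (cv_view (A j) (s |` vars (A j)))")
            case True
            have "\<exists>y. dom y = vars (A j) \<and> Trcv (A j) (s |` vars (A j)) y d star"
              using wf_facts(2)[OF _ dj'[OF that]] wf that by blast
            from someI_ex[OF this] show ?thesis unfolding t_def using True by simp
          next
            case False then show ?thesis unfolding t_def using dj'[OF that] by simp
          qed
          obtain s'' where s'': "dom s'' = Vs A L" "\<forall>j\<in>set L. s'' |` vars (A j) = t j"
            using construct[OF dj, of t] tprop by blast
          have "(s, Lbl d k p Rcv c, s'') \<in> ctrans (par_all star A L)"
            unfolding rc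
          proof (intro conjI)
            show "dom s = Vs A L" "dom s'' = Vs A L" using ds s''(1) by auto
            show "\<forall>j\<in>set L. Gloc star (A j) d p c (s |` vars (A j)) (s'' |` vars (A j))"
            proof
              fix j assume j: "j \<in> set L"
              show "Gloc star (A j) d p c (s |` vars (A j)) (s'' |` vars (A j))"
                using tprop[OF j] s''(2) j grs[OF j] st(1) unfolding Gloc_def Rloc_def t_def
                by (cases "p (cv_view (A j) (s |` vars (A j)))") auto
            qed
            show "\<exists>j\<in>set L. Rloc (A j) d p c (s |` vars (A j)) (s'' |` vars (A j))"
              using tprop[OF j0(1)] s''(2) j0(1) grs[OF j0(1)] st(1) pj0 unfolding Rloc_def by auto
          qed
          then show False using no by blast
        qed
      qed
    qed
  qed
qed


lemma rcv_single:
  fixes B :: "('var, 'val, 'cv, 'd, 'ch) agent"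
  assumes "k \<noteq> i"
  shows "(x, Lbl d k p Rcv c, y) \<in> ctrans (cts_of i B) \<longleftrightarrow>
     dom x = vars B \<and> dom y = vars B \<and> Gloc star B d p c (x |` vars B) (y |` vars B) \<and>
     Rloc B d p c (x |` vars B) (y |` vars B)"
  using assms by (auto simp: single_rcv Gloc_def restr_dom_eq)

lemma good_single:
  fixes B :: "('var, 'val, 'cv, 'd, 'ch) agent" and i :: 'i
  assumes "k \<noteq> i" "wf_agent star B" "dom x = vars B" "dom y = vars B"
  shows "Gloc star B d p c x y \<longleftrightarrow>
     (x, Lbl d k p Rcv c, y) \<in> ctrans (cts_of i B)
     \<or> (c \<notin> clisten (cts_of i B) x \<and> y = x)
     \<or> (c = star \<and> y = x \<and> \<not> (\<exists>s''. (x, Lbl d k p Rcv c, s'') \<in> ctrans (cts_of i B)))"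
proof -
  define A :: "'i \<Rightarrow> ('var, 'val, 'cv, 'd, 'ch) agent" where "A = (\<lambda>_. B)"
  have "(\<forall>j\<in>set [i]. Gloc star (A j) d p c (x |` vars (A j)) (y |` vars (A j))) \<longleftrightarrow>
     (x, Lbl d k p Rcv c, y) \<in> ctrans (par_all star A [i])
     \<or> (c \<notin> clisten (par_all star A [i]) x \<and> y = x)
     \<or> (c = star \<and> y = x \<and> \<not> (\<exists>s''. (x, Lbl d k p Rcv c, s'') \<in> ctrans (par_all star A [i])))"
  proof (rule good_from_rcv)
    show "disjL A [i]" by (simp add: disjL_def)
    show "\<forall>j\<in>set [i]. wf_agent star (A j)" using assms(2) by (simp add: A_def)
    show "\<And>s s'. ((s, Lbl d k p Rcv c, s') \<in> ctrans (par_all star A [i])) =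
          (dom s = Vs A [i] \<and> dom s' = Vs A [i] \<and>
           (\<forall>j\<in>set [i]. Gloc star (A j) d p c (s |` vars (A j)) (s' |` vars (A j))) \<and>
           (\<exists>j\<in>set [i]. Rloc (A j) d p c (s |` vars (A j)) (s' |` vars (A j))))"
      using rcv_single[OF assms(1)] by (simp add: A_def)
    show "clisten (par_all star A [i]) x = {c. \<exists>j\<in>set [i]. grcv (A j) (x |` vars (A j)) c}"
      using assms(3) by (simp add: A_def single_listen restr_dom_eq)
    show "dom x = Vs A [i]" "dom y = Vs A [i]" using assms(3,4) by (simp_all add: A_def)
  qed
  then show ?thesis using assms(3,4) by (simp add: A_def restr_dom_eq)
qed

lemma comb: "(Gi \<longleftrightarrow> m1 \<or> (n1 \<and> t1) \<or> (st \<and> t1 \<and> \<not> e1)) \<Longrightarrow>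
  (G2 \<longleftrightarrow> m2 \<or> (n2 \<and> t2) \<or> (st \<and> t2 \<and> \<not> e2)) \<Longrightarrow> (m1 \<longleftrightarrow> R1) \<Longrightarrow> (m2 \<longleftrightarrow> G2 \<and> E2) \<Longrightarrow>
  ((m1 \<and> m2) \<or> (m1 \<and> n2 \<and> t2) \<or> (m2 \<and> n1 \<and> t1) \<or> (st \<and> ((m1 \<and> t2 \<and> \<not> e2) \<or> (m2 \<and> t1 \<and> \<not> e1))))
   \<longleftrightarrow> (Gi \<and> G2 \<and> (R1 \<or> E2))"
  by blast

lemma rcv_char:
  fixes A :: "'i \<Rightarrow> ('var, 'val, 'cv, 'd, 'ch) agent"
  shows "L \<noteq> [] \<Longrightarrow> distinct L \<Longrightarrow> disjL A L \<Longrightarrow> \<forall>j\<in>set L. wf_agent star (A j) \<Longrightarrow> k \<notin> set L \<Longrightarrow>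
   \<forall>s s'. (s, Lbl d k p Rcv c, s') \<in> ctrans (par_all star A L) \<longleftrightarrow>
     dom s = Vs A L \<and> dom s' = Vs A L \<and>
     (\<forall>j\<in>set L. Gloc star (A j) d p c (s |` vars (A j)) (s' |` vars (A j))) \<and>
     (\<exists>j\<in>set L. Rloc (A j) d p c (s |` vars (A j)) (s' |` vars (A j)))"
proof (induction star A L rule: par_all.induct)
  case (1 star A) then show ?case by simp
next
  case (2 star A i) then show ?case using rcv_single[where k=k and i=i and B="A i"] by simp
next
  case (3 star A i j js)
  have d2: "distinct (j # js)" using 3(3) by simp
  have j2: "disjL A (j # js)" by (rule disjL_Cons[OF 3(4)])
  have w2: "\<forall>j'\<in>set (j # js). wf_agent star (A j')" using 3(5) by simp
  have wi: "wf_agent star (A i)" using 3(5) by simp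
  have k2: "k \<notin> set (j # js)" and ki: "k \<noteq> i" using 3(6) by auto
  let ?V2 = "Vs A (j # js)"
  let ?V1 = "vars (A i)"
  let ?T1 = "cts_of i (A i)"
  let ?T2 = "par_all star A (j # js)"
  let ?l = "Lbl d k p Rcv c"
  have st: "cstates ?T2 = {s. dom s = ?V2}"
    using pa_states[OF _ d2 j2] by simp
  have IH: "\<forall>s s'. (s, ?l, s') \<in> ctrans ?T2 \<longleftrightarrow>
     dom s = ?V2 \<and> dom s' = ?V2 \<and>
     (\<forall>j'\<in>set (j # js). Gloc star (A j') d p c (s |` vars (A j')) (s' |` vars (A j'))) \<and>
     (\<exists>j'\<in>set (j # js). Rloc (A j') d p c (s |` vars (A j')) (s' |` vars (A j')))"
    using 3(1)[OF _ d2 j2 w2 k2] by simp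
  have li: "\<forall>s. dom s = ?V2 \<longrightarrow> clisten ?T2 s = {c. \<exists>j'\<in>set (j # js). grcv (A j') (s |` vars (A j')) c}"
    using pa_listen[OF _ d2 j2] by simp
  have dj: "?V1 \<inter> ?V2 = {}" using disjL_Cons2[OF 3(4)] 3(3) by simp
  show ?case
  proof (intro allI)
    fix s s' :: "('var, 'val) asg"
    show "(s, ?l, s') \<in> ctrans (par_all star A (i # j # js)) \<longleftrightarrow>
     dom s = Vs A (i # j # js) \<and> dom s' = Vs A (i # j # js) \<and>
     (\<forall>j\<in>set (i # j # js). Gloc star (A j) d p c (s |` vars (A j)) (s' |` vars (A j))) \<and>
     (\<exists>j\<in>set (i # j # js). Rloc (A j) d p c (s |` vars (A j)) (s' |` vars (A j)))"
    proof (cases "dom s = ?V1 \<union> ?V2 \<and> dom s' = ?V1 \<union> ?V2")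
      case False
      have "(s, ?l, s') \<in> ctrans (par_all star A (i # j # js)) \<longrightarrow> dom s = ?V1 \<union> ?V2 \<and> dom s' = ?V1 \<union> ?V2"
        using par_trans[OF single_states st dj, where s=s and a="?l" and s'=s'] by simp
      then have ni: "(s, ?l, s') \<notin> ctrans (par_all star A (i # j # js))" using False by blast
      have nd: "\<not> (dom s = Vs A (i # j # js) \<and> dom s' = Vs A (i # j # js))" using False by simp
      show ?thesis using ni nd by (intro iffI) (simp_all only: not_True_eq_False simp_thms)
    next
      case True
      have r: "\<And>j' (x :: ('var, 'val) asg). j' \<in> set (j # js) \<Longrightarrow> x |` ?V2 |` vars (A j') = x |` vars (A j')"
        by (simp only: restrict_restrict Vs_Int)
      have ds1: "dom (s |` ?V1) = ?V1" "dom (s' |` ?V1) = ?V1" using True by auto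
      have ds2: "dom (s |` ?V2) = ?V2" "dom (s' |` ?V2) = ?V2" using True by auto
      have pt: "(s, ?l, s') \<in> ctrans (par_all star A (i # j # js)) \<longleftrightarrow>
          par_step star ?T1 ?T2 (s |` ?V1) (s |` ?V2) ?l (s' |` ?V1) (s' |` ?V2)"
        using par_trans[OF single_states st dj, where s=s and a="?l" and s'=s'] True by simp
      have r1: "(s |` ?V1, ?l, s' |` ?V1) \<in> ctrans ?T1 \<longleftrightarrow> Rloc (A i) d p c (s |` ?V1) (s' |` ?V1)"
        using ds1 ki by (simp add: single_rcv)
      define G2 where "G2 = (\<forall>j'\<in>set (j # js). Gloc star (A j') d p c (s |` vars (A j')) (s' |` vars (A j')))"
      define E2 where "E2 = (\<exists>j'\<in>set (j # js). Rloc (A j') d p c (s |` vars (A j')) (s' |` vars (A j')))"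
      have G2': "G2 = (\<forall>j'\<in>set (j # js). Gloc star (A j') d p c (s |` ?V2 |` vars (A j')) (s' |` ?V2 |` vars (A j')))"
        unfolding G2_def using r by simp
      have E2': "E2 = (\<exists>j'\<in>set (j # js). Rloc (A j') d p c (s |` ?V2 |` vars (A j')) (s' |` ?V2 |` vars (A j')))"
        unfolding E2_def using r by simp
      have r2: "(s |` ?V2, ?l, s' |` ?V2) \<in> ctrans ?T2 \<longleftrightarrow> G2 \<and> E2"
        unfolding G2' E2' using spec[OF spec[OF IH, of "s |` ?V2"], of "s' |` ?V2"] ds2 by simp
      have g1: "Gloc star (A i) d p c (s |` ?V1) (s' |` ?V1) \<longleftrightarrow>
          (s |` ?V1, ?l, s' |` ?V1) \<in> ctrans ?T1
          \<or> (c \<notin> clisten ?T1 (s |` ?V1) \<and> s' |` ?V1 = s |` ?V1)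
          \<or> (c = star \<and> s' |` ?V1 = s |` ?V1 \<and> \<not> (\<exists>s''. (s |` ?V1, ?l, s'') \<in> ctrans ?T1))"
        by (rule good_single[OF ki wi ds1])
      have g2: "G2 \<longleftrightarrow>
          (s |` ?V2, ?l, s' |` ?V2) \<in> ctrans ?T2
          \<or> (c \<notin> clisten ?T2 (s |` ?V2) \<and> s' |` ?V2 = s |` ?V2)
          \<or> (c = star \<and> s' |` ?V2 = s |` ?V2 \<and> \<not> (\<exists>s''. (s |` ?V2, ?l, s'') \<in> ctrans ?T2))"
        unfolding G2'
      proof (rule good_from_rcv[OF j2 w2])
        show "\<And>s s'. (s, ?l, s') \<in> ctrans ?T2 \<longleftrightarrow>
           dom s = ?V2 \<and> dom s' = ?V2 \<and>
           (\<forall>j'\<in>set (j # js). Gloc star (A j') d p c (s |` vars (A j')) (s' |` vars (A j'))) \<and>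
           (\<exists>j'\<in>set (j # js). Rloc (A j') d p c (s |` vars (A j')) (s' |` vars (A j')))"
          by (rule IH[rule_format])
        show "clisten ?T2 (s |` ?V2) = {c. \<exists>j'\<in>set (j # js). grcv (A j') (s |` ?V2 |` vars (A j')) c}"
          by (rule li[rule_format, OF ds2(1)])
      qed (fact ds2)+
      have ps: "par_step star ?T1 ?T2 (s |` ?V1) (s |` ?V2) ?l (s' |` ?V1) (s' |` ?V2) \<longleftrightarrow>
         ((s |` ?V1, ?l, s' |` ?V1) \<in> ctrans ?T1 \<and> (s |` ?V2, ?l, s' |` ?V2) \<in> ctrans ?T2)
         \<or> ((s |` ?V1, ?l, s' |` ?V1) \<in> ctrans ?T1 \<and> c \<notin> clisten ?T2 (s |` ?V2) \<and> s' |` ?V2 = s |` ?V2)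
         \<or> ((s |` ?V2, ?l, s' |` ?V2) \<in> ctrans ?T2 \<and> c \<notin> clisten ?T1 (s |` ?V1) \<and> s' |` ?V1 = s |` ?V1)
         \<or> (c = star \<and>
            (((s |` ?V1, ?l, s' |` ?V1) \<in> ctrans ?T1 \<and> s' |` ?V2 = s |` ?V2 \<and> \<not> (\<exists>s''. (s |` ?V2, ?l, s'') \<in> ctrans ?T2))
           \<or> ((s |` ?V2, ?l, s' |` ?V2) \<in> ctrans ?T2 \<and> s' |` ?V1 = s |` ?V1 \<and> \<not> (\<exists>s''. (s |` ?V1, ?l, s'') \<in> ctrans ?T1))))"
        unfolding par_step_def Let_def by simp
      have rhs: "(dom s = Vs A (i # j # js) \<and> dom s' = Vs A (i # j # js) \<and>
          (\<forall>j\<in>set (i # j # js). Gloc star (A j) d p c (s |` vars (A j)) (s' |` vars (A j))) \<and>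
          (\<exists>j\<in>set (i # j # js). Rloc (A j) d p c (s |` vars (A j)) (s' |` vars (A j))))
        \<longleftrightarrow> Gloc star (A i) d p c (s |` ?V1) (s' |` ?V1) \<and> G2 \<and> (Rloc (A i) d p c (s |` ?V1) (s' |` ?V1) \<or> E2)"
        unfolding G2_def E2_def using True by simp
      show ?thesis unfolding pt rhs ps by (rule comb[OF g1 g2 r1 r2])
    qed
  qed
qed


lemma combA: "\<not> m2s \<Longrightarrow> (G2 \<longleftrightarrow> m2r \<or> (n2 \<and> t2) \<or> (st \<and> t2 \<and> \<not> e2)) \<Longrightarrow>
  ((m1s \<and> (m2r \<or> (n2 \<and> t2))) \<or> (m2s \<and> (m1r \<or> (n1 \<and> t1))) \<or> (st \<and> ((m1s \<and> t2 \<and> \<not> e2) \<or> (m2s \<and> t1 \<and> \<not> e1))))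
   \<longleftrightarrow> m1s \<and> G2"
  by blast

lemma combB: "\<not> m1s \<Longrightarrow> (G1 \<longleftrightarrow> m1r \<or> (n1 \<and> t1) \<or> (st \<and> t1 \<and> \<not> e1)) \<Longrightarrow>
  ((m1s \<and> (m2r \<or> (n2 \<and> t2))) \<or> (m2s \<and> (m1r \<or> (n1 \<and> t1))) \<or> (st \<and> ((m1s \<and> t2 \<and> \<not> e2) \<or> (m2s \<and> t1 \<and> \<not> e1))))
   \<longleftrightarrow> m2s \<and> G1"
  by blast

lemma snd_char:
  fixes A :: "'i \<Rightarrow> ('var, 'val, 'cv, 'd, 'ch) agent"
  shows "L \<noteq> [] \<Longrightarrow> distinct L \<Longrightarrow> disjL A L \<Longrightarrow> \<forall>j\<in>set L. wf_agent star (A j) \<Longrightarrow>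
   \<forall>s s'. (s, Lbl d k p Snd c, s') \<in> ctrans (par_all star A L) \<longleftrightarrow>
     k \<in> set L \<and> dom s = Vs A L \<and> dom s' = Vs A L \<and>
     p = gsnd (A k) (s |` vars (A k)) c d \<and> Tsnd (A k) (s |` vars (A k)) (s' |` vars (A k)) d c \<and>
     (\<forall>j\<in>set L - {k}. Gloc star (A j) d p c (s |` vars (A j)) (s' |` vars (A j)))"
proof (induction star A L rule: par_all.induct)
  case (1 star A) then show ?case by simp
next
  case (2 star A i)
  show ?case
  proof (intro allI)
    fix s s' :: "('var, 'val) asg"
    show "(s, Lbl d k p Snd c, s') \<in> ctrans (par_all star A [i]) \<longleftrightarrow>
     k \<in> set [i] \<and> dom s = Vs A [i] \<and> dom s' = Vs A [i] \<and>
     p = gsnd (A k) (s |` vars (A k)) c d \<and> Tsnd (A k) (s |` vars (A k)) (s' |` vars (A k)) d c \<and>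
     (\<forall>j\<in>set [i] - {k}. Gloc star (A j) d p c (s |` vars (A j)) (s' |` vars (A j)))"
    proof (cases "dom s = vars (A i) \<and> dom s' = vars (A i)")
      case True
      then have "s |` vars (A i) = s" "s' |` vars (A i) = s'" by (simp_all add: restr_dom_eq)
      then show ?thesis using True by (auto simp: single_snd)
    next
      case False then show ?thesis by (auto simp: single_snd)
    qed
  qed
next
  case (3 star A i j js)
  have d2: "distinct (j # js)" using 3(3) by simp
  have j2: "disjL A (j # js)" by (rule disjL_Cons[OF 3(4)])
  have w2: "\<forall>j'\<in>set (j # js). wf_agent star (A j')" using 3(5) by simp
  have wi: "wf_agent star (A i)" using 3(5) by simp
  have i2: "i \<notin> set (j # js)" using 3(3) by simp
  let ?V2 = "Vs A (j # js)"
  let ?V1 = "vars (A i)"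
  let ?T1 = "cts_of i (A i)"
  let ?T2 = "par_all star A (j # js)"
  let ?l = "Lbl d k p Snd c"
  let ?lr = "Lbl d k p Rcv c"
  have st: "cstates ?T2 = {s. dom s = ?V2}"
    using pa_states[OF _ d2 j2] by simp
  have IH: "\<forall>s s'. (s, ?l, s') \<in> ctrans ?T2 \<longleftrightarrow>
     k \<in> set (j # js) \<and> dom s = ?V2 \<and> dom s' = ?V2 \<and>
     p = gsnd (A k) (s |` vars (A k)) c d \<and> Tsnd (A k) (s |` vars (A k)) (s' |` vars (A k)) d c \<and>
     (\<forall>j'\<in>set (j # js) - {k}. Gloc star (A j') d p c (s |` vars (A j')) (s' |` vars (A j')))"
    using 3(1)[OF _ d2 j2 w2] by simp
  have li: "\<forall>s. dom s = ?V2 \<longrightarrow> clisten ?T2 s = {c. \<exists>j'\<in>set (j # js). grcv (A j') (s |` vars (A j')) c}"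
    using pa_listen[OF _ d2 j2] by simp
  have dj: "?V1 \<inter> ?V2 = {}" using disjL_Cons2[OF 3(4)] 3(3) by simp
  show ?case
  proof (intro allI)
    fix s s' :: "('var, 'val) asg"
    show "(s, ?l, s') \<in> ctrans (par_all star A (i # j # js)) \<longleftrightarrow>
     k \<in> set (i # j # js) \<and> dom s = Vs A (i # j # js) \<and> dom s' = Vs A (i # j # js) \<and>
     p = gsnd (A k) (s |` vars (A k)) c d \<and> Tsnd (A k) (s |` vars (A k)) (s' |` vars (A k)) d c \<and>
     (\<forall>j\<in>set (i # j # js) - {k}. Gloc star (A j) d p c (s |` vars (A j)) (s' |` vars (A j)))"
    proof (cases "dom s = ?V1 \<union> ?V2 \<and> dom s' = ?V1 \<union> ?V2")
      case False
      have "(s, ?l, s') \<in> ctrans (par_all star A (i # j # js)) \<longrightarrow> dom s = ?V1 \<union> ?V2 \<and> dom s' = ?V1 \<union> ?V2"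
        using par_trans[OF single_states st dj, where s=s and a="?l" and s'=s'] by simp
      then have ni: "(s, ?l, s') \<notin> ctrans (par_all star A (i # j # js))" using False by blast
      have nd: "\<not> (dom s = Vs A (i # j # js) \<and> dom s' = Vs A (i # j # js))" using False by simp
      show ?thesis using ni nd by (intro iffI) (simp_all only: not_True_eq_False simp_thms)
    next
      case True
      have r: "\<And>j' (x :: ('var, 'val) asg). j' \<in> set (j # js) \<Longrightarrow> x |` ?V2 |` vars (A j') = x |` vars (A j')"
        by (simp only: restrict_restrict Vs_Int)
      have ds1: "dom (s |` ?V1) = ?V1" "dom (s' |` ?V1) = ?V1" using True by auto
      have ds2: "dom (s |` ?V2) = ?V2" "dom (s' |` ?V2) = ?V2" using True by auto
      have pt: "(s, ?l, s') \<in> ctrans (par_all star A (i # j # js)) \<longleftrightarrow>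
          par_step star ?T1 ?T2 (s |` ?V1) (s |` ?V2) ?l (s' |` ?V1) (s' |` ?V2)"
        using par_trans[OF single_states st dj, where s=s and a="?l" and s'=s'] True by simp
      have ps: "par_step star ?T1 ?T2 (s |` ?V1) (s |` ?V2) ?l (s' |` ?V1) (s' |` ?V2) \<longleftrightarrow>
         (((s |` ?V1, ?l, s' |` ?V1) \<in> ctrans ?T1 \<and> ((s |` ?V2, ?lr, s' |` ?V2) \<in> ctrans ?T2 \<or> (c \<notin> clisten ?T2 (s |` ?V2) \<and> s' |` ?V2 = s |` ?V2)))
         \<or> ((s |` ?V2, ?l, s' |` ?V2) \<in> ctrans ?T2 \<and> ((s |` ?V1, ?lr, s' |` ?V1) \<in> ctrans ?T1 \<or> (c \<notin> clisten ?T1 (s |` ?V1) \<and> s' |` ?V1 = s |` ?V1)))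
         \<or> (c = star \<and>
            (((s |` ?V1, ?l, s' |` ?V1) \<in> ctrans ?T1 \<and> s' |` ?V2 = s |` ?V2 \<and> \<not> (\<exists>s''. (s |` ?V2, ?lr, s'') \<in> ctrans ?T2))
           \<or> ((s |` ?V2, ?l, s' |` ?V2) \<in> ctrans ?T2 \<and> s' |` ?V1 = s |` ?V1 \<and> \<not> (\<exists>s''. (s |` ?V1, ?lr, s'') \<in> ctrans ?T1)))))"
        unfolding par_step_def Let_def by simp
      have m1: "(s |` ?V1, ?l, s' |` ?V1) \<in> ctrans ?T1 \<longleftrightarrow> k = i \<and>
          Tsnd (A i) (s |` ?V1) (s' |` ?V1) d c \<and> p = gsnd (A i) (s |` ?V1) c d"
        using ds1 by (simp add: single_snd)
      have m2: "(s |` ?V2, ?l, s' |` ?V2) \<in> ctrans ?T2 \<longleftrightarrow>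
         k \<in> set (j # js) \<and> p = gsnd (A k) (s |` vars (A k)) c d \<and> Tsnd (A k) (s |` vars (A k)) (s' |` vars (A k)) d c \<and>
         (\<forall>j'\<in>set (j # js) - {k}. Gloc star (A j') d p c (s |` vars (A j')) (s' |` vars (A j')))"
      proof -
        have "(s |` ?V2, ?l, s' |` ?V2) \<in> ctrans ?T2 \<longleftrightarrow>
         k \<in> set (j # js) \<and> p = gsnd (A k) (s |` ?V2 |` vars (A k)) c d \<and> Tsnd (A k) (s |` ?V2 |` vars (A k)) (s' |` ?V2 |` vars (A k)) d c \<and>
         (\<forall>j'\<in>set (j # js) - {k}. Gloc star (A j') d p c (s |` ?V2 |` vars (A j')) (s' |` ?V2 |` vars (A j')))"
          using spec[OF spec[OF IH, of "s |` ?V2"], of "s' |` ?V2"] ds2 by simp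
        also have "\<dots> \<longleftrightarrow> k \<in> set (j # js) \<and> p = gsnd (A k) (s |` vars (A k)) c d \<and> Tsnd (A k) (s |` vars (A k)) (s' |` vars (A k)) d c \<and>
         (\<forall>j'\<in>set (j # js) - {k}. Gloc star (A j') d p c (s |` vars (A j')) (s' |` vars (A j')))"
          using r by auto
        finally show ?thesis .
      qed
      show ?thesis
      proof (cases "k = i")
        case True
        have k2: "k \<notin> set (j # js)" using True i2 by simp
        have rc2: "\<forall>s s'. (s, ?lr, s') \<in> ctrans ?T2 \<longleftrightarrow>
           dom s = ?V2 \<and> dom s' = ?V2 \<and>
           (\<forall>j'\<in>set (j # js). Gloc star (A j') d p c (s |` vars (A j')) (s' |` vars (A j'))) \<and>
           (\<exists>j'\<in>set (j # js). Rloc (A j') d p c (s |` vars (A j')) (s' |` vars (A j')))"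
          using rcv_char[OF _ d2 j2 w2 k2] by simp
        define G2 where "G2 = (\<forall>j'\<in>set (j # js). Gloc star (A j') d p c (s |` vars (A j')) (s' |` vars (A j')))"
        have G2': "G2 = (\<forall>j'\<in>set (j # js). Gloc star (A j') d p c (s |` ?V2 |` vars (A j')) (s' |` ?V2 |` vars (A j')))"
          unfolding G2_def using r by simp
        have g2: "G2 \<longleftrightarrow>
          (s |` ?V2, ?lr, s' |` ?V2) \<in> ctrans ?T2
          \<or> (c \<notin> clisten ?T2 (s |` ?V2) \<and> s' |` ?V2 = s |` ?V2)
          \<or> (c = star \<and> s' |` ?V2 = s |` ?V2 \<and> \<not> (\<exists>s''. (s |` ?V2, ?lr, s'') \<in> ctrans ?T2))"
          unfolding G2'
        proof (rule good_from_rcv[OF j2 w2])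
          show "\<And>s s'. (s, ?lr, s') \<in> ctrans ?T2 \<longleftrightarrow>
             dom s = ?V2 \<and> dom s' = ?V2 \<and>
             (\<forall>j'\<in>set (j # js). Gloc star (A j') d p c (s |` vars (A j')) (s' |` vars (A j'))) \<and>
             (\<exists>j'\<in>set (j # js). Rloc (A j') d p c (s |` vars (A j')) (s' |` vars (A j')))"
            by (rule rc2[rule_format])
          show "clisten ?T2 (s |` ?V2) = {c. \<exists>j'\<in>set (j # js). grcv (A j') (s |` ?V2 |` vars (A j')) c}"
            by (rule li[rule_format, OF ds2(1)])
        qed (fact ds2)+
        have nm2: "(s |` ?V2, ?l, s' |` ?V2) \<notin> ctrans ?T2" using m2 k2 by blast
        have e: "(s, ?l, s') \<in> ctrans (par_all star A (i # j # js)) \<longleftrightarrow>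
            (s |` ?V1, ?l, s' |` ?V1) \<in> ctrans ?T1 \<and> G2"
          unfolding pt ps by (rule combA[OF nm2 g2])
        have sets: "set (i # j # js) - {k} = set (j # js)" using True i2 by auto
        show ?thesis unfolding e m1 sets G2_def using True True(1) \<open>dom s = ?V1 \<union> ?V2 \<and> dom s' = ?V1 \<union> ?V2\<close>
          by auto
      next
        case False
        have nm1: "(s |` ?V1, ?l, s' |` ?V1) \<notin> ctrans ?T1" using m1 False by blast
        have g1: "Gloc star (A i) d p c (s |` ?V1) (s' |` ?V1) \<longleftrightarrow>
          (s |` ?V1, ?lr, s' |` ?V1) \<in> ctrans ?T1
          \<or> (c \<notin> clisten ?T1 (s |` ?V1) \<and> s' |` ?V1 = s |` ?V1)
          \<or> (c = star \<and> s' |` ?V1 = s |` ?V1 \<and> \<not> (\<exists>s''. (s |` ?V1, ?lr, s'') \<in> ctrans ?T1))"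
          by (rule good_single[OF False wi ds1])
        have e: "(s, ?l, s') \<in> ctrans (par_all star A (i # j # js)) \<longleftrightarrow>
            (s |` ?V2, ?l, s' |` ?V2) \<in> ctrans ?T2 \<and> Gloc star (A i) d p c (s |` ?V1) (s' |` ?V1)"
          unfolding pt ps by (rule combB[OF nm1 g1])
        have sets: "set (i # j # js) - {k} = insert i (set (j # js) - {k})" using False by auto
        show ?thesis unfolding e m2 sets using False \<open>dom s = ?V1 \<union> ?V2 \<and> dom s' = ?V1 \<union> ?V2\<close>
          by auto
      qed
    qed
  qed
qed


lemma cvv_ex: "(\<exists>cvv. (\<forall>cv. cvv cv = the (x (rn B cv))) \<and> P cvv) \<longleftrightarrow> P (cv_view B x)"
proof -
  have "(\<forall>cv. cvv cv = the (x (rn B cv))) \<longleftrightarrow> cvv = cv_view B x" for cvv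
    unfolding cv_view_def by (auto simp: fun_eq_iff)
  then show ?thesis by auto
qed

lemma lbl_send: "is_send a \<Longrightarrow> \<exists>d k p c. a = Lbl d k p Snd c"
  by (cases a) auto

theorem mainTheorem4:
  fixes star :: "'ch"
    and A :: "'i \<Rightarrow> ('var, 'val::finite, 'cv, 'd, 'ch) agent"
    and I :: "'i set"
    and ids :: "'i list"
  assumes "set ids = I" and "distinct ids" and "I \<noteq> {}"
    and "\<forall>i\<in>I. wf_agent star (A i)"
    and "\<forall>i\<in>I. \<forall>j\<in>I. i \<noteq> j \<longrightarrow> vars (A i) \<inter> vars (A j) = {}"
  shows "{(s, \<lambda>t. obs_lbl (m t)) | s m. is_sys_trace star I A s m \<and> sys_theta I A (s 0)}
       = {(s, a). is_path (par_all star A ids) s a \<and> (\<forall>t. is_send (a t))}"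
proof -
  have ne: "ids \<noteq> []" using assms(1,3) by auto
  have dj: "disjL A ids" using assms(1,5) unfolding disjL_def by simp
  have wf: "\<forall>j\<in>set ids. wf_agent star (A j)" using assms(1,4) by simp
  have av: "allvars I A = Vs A ids" unfolding allvars_def Vs_def using assms(1) by simp
  have init: "cinit (par_all star A ids) = {s. dom s = Vs A ids \<and> (\<forall>j\<in>set ids. theta (A j) (s |` vars (A j)))}"
    by (rule pa_init[OF ne assms(2) dj])
  have sc: "\<forall>s s'. (s, Lbl d k p Snd c, s') \<in> ctrans (par_all star A ids) \<longleftrightarrow>
     k \<in> set ids \<and> dom s = Vs A ids \<and> dom s' = Vs A ids \<and>
     p = gsnd (A k) (s |` vars (A k)) c d \<and> Tsnd (A k) (s |` vars (A k)) (s' |` vars (A k)) d c \<and>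
     (\<forall>j\<in>set ids - {k}. Gloc star (A j) d p c (s |` vars (A j)) (s' |` vars (A j)))" for d k p c
    by (rule snd_char[OF ne assms(2) dj wf])
  have step: "sys_step star I A s m s' \<longleftrightarrow> (s, obs_lbl m, s') \<in> ctrans (par_all star A ids)"
    if "dom s = Vs A ids" "dom s' = Vs A ids" for s s' m
  proof -
    obtain ch d k p where m: "m = (ch, d, k, p)" by (cases m) auto
    have loc: "(let sj = s |` vars (A j); sj' = s' |` vars (A j) in
         \<exists>cvv. (\<forall>cv. cvv cv = the (sj (rn (A j) cv))) \<and>
           ((grcv (A j) sj ch \<and> Trcv (A j) sj sj' d ch \<and> p cvv)
            \<or> (\<not> grcv (A j) sj ch \<and> sj = sj')
            \<or> (ch = star \<and> \<not> p cvv \<and> sj = sj')))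
       \<longleftrightarrow> Gloc star (A j) d p ch (s |` vars (A j)) (s' |` vars (A j))" for j
      unfolding Let_def Gloc_def Rloc_def by (rule cvv_ex)
    have "sys_step star I A s m s' \<longleftrightarrow> k \<in> I \<and> p = gsnd (A k) (s |` vars (A k)) ch d \<and>
       Tsnd (A k) (s |` vars (A k)) (s' |` vars (A k)) d ch \<and>
       (\<forall>j\<in>I - {k}. Gloc star (A j) d p ch (s |` vars (A j)) (s' |` vars (A j)))"
      unfolding m sys_step_def prod.case loc ..
    then show ?thesis
      unfolding m obs_lbl.simps sc[rule_format] using that assms(1) by auto
  qed
  show ?thesis
  proof (rule set_eqI, rule iffI)
    fix x assume "x \<in> {(s, \<lambda>t. obs_lbl (m t)) | s m. is_sys_trace star I A s m \<and> sys_theta I A (s 0)}"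
    then obtain s m where x: "x = (s, \<lambda>t. obs_lbl (m t))" and tr: "is_sys_trace star I A s m"
      and th: "sys_theta I A (s 0)" by blast
    have ds: "\<And>t. dom (s t) = Vs A ids" using tr av unfolding is_sys_trace_def by simp
    have "is_path (par_all star A ids) s (\<lambda>t. obs_lbl (m t))"
      unfolding is_path_def
    proof
      show "s 0 \<in> cinit (par_all star A ids)" unfolding init using ds th assms(1)
        unfolding sys_theta_def by simp
      show "\<forall>j. (s j, obs_lbl (m j), s (Suc j)) \<in> ctrans (par_all star A ids)"
        using step[OF ds ds] tr unfolding is_sys_trace_def by blast
    qed
    moreover have "\<forall>t. is_send (obs_lbl (m t))"
    proof
      fix t show "is_send (obs_lbl (m t))" by (cases "m t") simp
    qed
    ultimately show "x \<in> {(s, a). is_path (par_all star A ids) s a \<and> (\<forall>t. is_send (a t))}"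
      using x by simp
  next
    fix x assume "x \<in> {(s, a). is_path (par_all star A ids) s a \<and> (\<forall>t. is_send (a t))}"
    then obtain s a where x: "x = (s, a)" and pa: "is_path (par_all star A ids) s a"
      and se: "\<forall>t. is_send (a t)" by auto
    define m where "m = (\<lambda>t. case a t of Lbl d k p dr c \<Rightarrow> (c, d, k, p))"
    have am: "a = (\<lambda>t. obs_lbl (m t))"
    proof
      fix t
      obtain d k p c where "a t = Lbl d k p Snd c" using lbl_send se by blast
      then show "a t = obs_lbl (m t)" unfolding m_def by simp
    qed
    have tr: "\<And>t. (s t, a t, s (Suc t)) \<in> ctrans (par_all star A ids)" using pa unfolding is_path_def by blast
    have ds: "\<And>t. dom (s t) = Vs A ids"
    proof -
      fix t
      obtain d k p c where "a t = Lbl d k p Snd c" using lbl_send se by blast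
      then show "dom (s t) = Vs A ids" using tr[of t] sc by simp
    qed
    have "is_sys_trace star I A s m"
      unfolding is_sys_trace_def av
    proof
      fix t show "dom (s t) = Vs A ids \<and> sys_step star I A (s t) (m t) (s (Suc t))"
        using ds step[OF ds ds] tr[of t] am by simp
    qed
    moreover have "sys_theta I A (s 0)"
      using pa assms(1) unfolding is_path_def init sys_theta_def by simp
    ultimately show "x \<in> {(s, \<lambda>t. obs_lbl (m t)) | s m. is_sys_trace star I A s m \<and> sys_theta I A (s 0)}"
      using x am by blast
  qed
qed

end
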